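(* Let $M$ be a unit speed curve $\gamma: I\to\mathbb{R}^3$ with arc-length parameter $s$, curvature $\kappa(s) \neq 0$ and torsion $\tau(s)$, and put $\varphi(s) = \int_0^s \tau(t)\,dt + \varphi_0$ for a constant $\varphi_0$. Let $K$ be a curve $\beta$, parametrized by the same arc-length parameter $s$, with $\beta''(s) = \overline{\kappa}(s)\gamma'(s)$, whose curvature and torsion are $$\overline{\kappa}(s) = \kappa(s)\cos\varphi(s), \qquad \overline{\tau}(s) = \kappa(s)\sin\varphi(s).$$ Let $u,w$ be functions on $I$, not simultaneously zero, and let $\lambda$ be a nonzero real constant. Then the curvatures of $K$ satisfy $u\overline{\kappa} - w\overline{\tau} = \lambda(\overline{\kappa}^2+\overline{\tau}^2)$ (the $V$-Mannheim condition for $K$) if and only if $$\kappa(s) = F(s)\cos\big(\varphi(s)+\phi(s)\big),$$ where $F(s) = \frac{\sqrt{u^2+w^2}}{\lambda}$, $\cos\phi(s) = \frac{u}{\sqrt{u^2+w^2}}$ and $\sin\phi(s) = \frac{w}{\sqrt{u^2+w^2}}$.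
   Context: For a unit vector field $V = uT+vN+wB$ along a curve with curvature $\kappa$ and torsion $\tau$, the paper characterizes $V$-Mannheim curves by the relation $u\kappa - w\tau = \lambda(\kappa^2+\tau^2)$; here this relation is imposed on the curvatures $\overline{\kappa},\overline{\tau}$ of $K$. *)

theory Defs
  imports "HOL-Analysis.Analysis" "HOL-Analysis.Cross3"
begin

definition dcurve :: "(real \<Rightarrow> real^3) \<Rightarrow> real \<Rightarrow> real^3" where
  "dcurve g = (\<lambda>t. vector_derivative g (at t))"

definition curvature :: "(real \<Rightarrow> real^3) \<Rightarrow> real \<Rightarrow> real" where
  "curvature g s = norm (dcurve (dcurve g) s)"

definition torsion :: "(real \<Rightarrow> real^3) \<Rightarrow> real \<Rightarrow> real" where
  "torsion g s = (cross3 (dcurve g s) (dcurve (dcurve g) s) \<bullet> dcurve (dcurve (dcurve g)) s)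
                 / (curvature g s)^2"

definition oint :: "real \<Rightarrow> real \<Rightarrow> (real \<Rightarrow> real) \<Rightarrow> real" where
  "oint a b f = (if a \<le> b then integral {a..b} f else - integral {b..a} f)"

end

theory Submission
  imports Defs
begin

lemma pt:
  fixes k c d u w lam r cp sp :: real
  assumes "k \<noteq> 0" "lam \<noteq> 0" "r > 0" "cp = u / r" "sp = w / r" and that: "c^2 + d^2 = 1"
  shows "(u * (k * c) - w * (k * d) = lam * ((k * c)^2 + (k * d)^2))
     \<longleftrightarrow> k = r / lam * (c * cp - d * sp)"
proof -
  have "(k * c)^2 + (k * d)^2 = k^2" proof -
    have "(k * c)^2 + (k * d)^2 = k^2 * (c^2 + d^2)" by (simp add: power_mult_distrib algebra_simps)
    thus ?thesis using that by simp
  qed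
  hence "(u * (k * c) - w * (k * d) = lam * ((k * c)^2 + (k * d)^2)) \<longleftrightarrow> k * (u*c - w*d) = k * (lam * k)"
    by (simp add: power2_eq_square algebra_simps)
  also have "\<dots> \<longleftrightarrow> u*c - w*d = lam * k" using assms(1) by simp
  also have "\<dots> \<longleftrightarrow> k = r / lam * (c * cp - d * sp)" using assms by (auto simp: field_simps)
  finally show ?thesis .
qed

theorem mainTheorem4:
  fixes \<gamma> \<beta> :: "real \<Rightarrow> real^3"
    and I :: "real set"
    and \<kappa> \<tau> \<phi> \<kappa>K \<tau>K u w \<psi> F :: "real \<Rightarrow> real"
    and \<phi>0 lam :: real
  assumes I: "open I" "is_interval I" "0 \<in> I"
    and smooth: "\<forall>s\<in>I. \<gamma> differentiable (at s) \<and> dcurve \<gamma> differentiable (at s)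
                        \<and> dcurve (dcurve \<gamma>) differentiable (at s)"
    and unit: "\<forall>s\<in>I. norm (dcurve \<gamma> s) = 1"
    and kap: "\<forall>s\<in>I. \<kappa> s = curvature \<gamma> s \<and> \<kappa> s \<noteq> 0"
    and tau: "\<forall>s\<in>I. \<tau> s = torsion \<gamma> s"
    and tau_int: "\<forall>s\<in>I. \<tau> integrable_on (closed_segment 0 s)"
    and phi: "\<forall>s\<in>I. \<phi> s = oint 0 s \<tau> + \<phi>0"
    and beta_smooth: "\<forall>s\<in>I. \<beta> differentiable (at s) \<and> dcurve \<beta> differentiable (at s)"
    and beta2: "\<forall>s\<in>I. dcurve (dcurve \<beta>) s = \<kappa>K s *\<^sub>R dcurve \<gamma> s"
    and kapK: "\<forall>s\<in>I. \<kappa>K s = \<kappa> s * cos (\<phi> s)"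
    and tauK: "\<forall>s\<in>I. \<tau>K s = \<kappa> s * sin (\<phi> s)"
    and uw: "\<forall>s\<in>I. u s \<noteq> 0 \<or> w s \<noteq> 0"
    and lam_nz: "lam \<noteq> 0"
    and F: "\<forall>s\<in>I. F s = sqrt ((u s)^2 + (w s)^2) / lam"
    and psi: "\<forall>s\<in>I. cos (\<psi> s) = u s / sqrt ((u s)^2 + (w s)^2)
                   \<and> sin (\<psi> s) = w s / sqrt ((u s)^2 + (w s)^2)"
  shows "(\<forall>s\<in>I. u s * \<kappa>K s - w s * \<tau>K s = lam * ((\<kappa>K s)^2 + (\<tau>K s)^2))
     \<longleftrightarrow> (\<forall>s\<in>I. \<kappa> s = F s * cos (\<phi> s + \<psi> s))"
proof -
  have "(u s * \<kappa>K s - w s * \<tau>K s = lam * ((\<kappa>K s)^2 + (\<tau>K s)^2)) \<longleftrightarrow> \<kappa> s = F s * cos (\<phi> s + \<psi> s)"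
    if s: "s \<in> I" for s
  proof -
    have r: "sqrt ((u s)^2 + (w s)^2) > 0" using uw s by (auto simp: add_pos_nonneg add_nonneg_pos)
    have k: "\<kappa> s \<noteq> 0" using kap s by auto
    have e: "\<kappa>K s = \<kappa> s * cos (\<phi> s)" "\<tau>K s = \<kappa> s * sin (\<phi> s)"
      "F s = sqrt ((u s)^2 + (w s)^2) / lam" using s kapK tauK F by auto
    have p: "cos (\<psi> s) = u s / sqrt ((u s)^2 + (w s)^2)" "sin (\<psi> s) = w s / sqrt ((u s)^2 + (w s)^2)"
      using psi s by auto
    have "F s * cos (\<phi> s + \<psi> s) = sqrt ((u s)^2 + (w s)^2) / lam * (cos (\<phi> s) * cos (\<psi> s) - sin (\<phi> s) * sin (\<psi> s))"
      by (simp add: e cos_add)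
    then show ?thesis
      unfolding e(1,2)
      using pt[OF k lam_nz r p sin_cos_squared_add2[of "\<phi> s"]] by simp
  qed
  thus ?thesis by auto
qed

end
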